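(* Let $X,Y$ be finite sets, $u:X\times Y\to\mathbb{R}$, $\rho\in\Delta(X)$ and $\phi\in\Delta(Y)$. A joint distribution $\gamma\in\Delta(X\times Y)$ with $X$-marginal $\rho$ and $Y$-marginal $\phi$ is the unique solution to the optimal transport problem \[\max_{\gamma'\in\Delta(X\times Y)}\sum_{x,y}u(x,y)\gamma'(x,y)\quad\text{s.t. }\gamma'\text{ has }X\text{-marginal }\rho\text{ and }Y\text{-marginal }\phi\] if and only if its support $\mathrm{supp}(\gamma)\subset X\times Y$ is strictly $u$-cyclically monotone.
   Context: A set $S\subset X\times Y$ is strictly $u$-cyclically monotone if for every finite collection of pairs $\{(x_i,y_i)\}_{i=1}^N\subset S$ such that the set $\{(x_i,y_i)\}_{i=1}^N$ differs from the set $\{(x_i,y_{i+1})\}_{i=1}^N$ (with the convention $y_{N+1}=y_1$), one has $\sum_{i=1}^Nu(x_i,y_i)>\sum_{i=1}^Nu(x_i,y_{i+1})$. *)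

theory Defs
  imports Complex_Main
begin

definition is_distribution :: "('a::finite \<Rightarrow> real) \<Rightarrow> bool" where
  "is_distribution p \<longleftrightarrow> (\<forall>a. p a \<ge> 0) \<and> (\<Sum>a\<in>UNIV. p a) = 1"

definition has_marginals ::
  "('x::finite \<times> 'y::finite \<Rightarrow> real) \<Rightarrow> ('x \<Rightarrow> real) \<Rightarrow> ('y \<Rightarrow> real) \<Rightarrow> bool" where
  "has_marginals g rho phi \<longleftrightarrow>
     (\<forall>x. (\<Sum>y\<in>UNIV. g (x, y)) = rho x) \<and> (\<forall>y. (\<Sum>x\<in>UNIV. g (x, y)) = phi y)"

definition support :: "('a \<Rightarrow> real) \<Rightarrow> 'a set" where
  "support g = {z. g z \<noteq> 0}"

definition transport_value :: "('x::finite \<times> 'y::finite \<Rightarrow> real) \<Rightarrow> ('x \<times> 'y \<Rightarrow> real) \<Rightarrow> real" where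
  "transport_value u g = (\<Sum>z\<in>UNIV. u z * g z)"

text \<open>Strict u-cyclical monotonicity: finite collections are indexed by i < N
  (repetitions allowed), cyclic shift y_{N+1} = y_1 realised by (i+1) mod N.\<close>
definition strictly_cyclically_monotone :: "('x \<times> 'y \<Rightarrow> real) \<Rightarrow> ('x \<times> 'y) set \<Rightarrow> bool" where
  "strictly_cyclically_monotone u S \<longleftrightarrow>
    (\<forall>N::nat. \<forall>xs :: nat \<Rightarrow> 'x. \<forall>ys :: nat \<Rightarrow> 'y.
       (\<forall>i<N. (xs i, ys i) \<in> S) \<longrightarrow>
       {(xs i, ys i) | i. i < N} \<noteq> {(xs i, ys ((i + 1) mod N)) | i. i < N} \<longrightarrow>
       (\<Sum>i<N. u (xs i, ys i)) > (\<Sum>i<N. u (xs i, ys ((i + 1) mod N))))"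

definition unique_ot_solution ::
  "('x::finite \<times> 'y::finite \<Rightarrow> real) \<Rightarrow> ('x \<Rightarrow> real) \<Rightarrow> ('y \<Rightarrow> real) \<Rightarrow> ('x \<times> 'y \<Rightarrow> real) \<Rightarrow> bool" where
  "unique_ot_solution u rho phi g \<longleftrightarrow>
     is_distribution g \<and> has_marginals g rho phi \<and>
     (\<forall>g'. is_distribution g' \<and> has_marginals g' rho phi \<and> g' \<noteq> g \<longrightarrow>
        transport_value u g' < transport_value u g)"

end

theory Submission
  imports Defs
begin

definition cyc :: "nat \<Rightarrow> (nat \<Rightarrow> 'x) \<Rightarrow> (nat \<Rightarrow> 'y) \<Rightarrow> 'x \<times> 'y \<Rightarrow> real" where
  "cyc N xs ys z = (\<Sum>k<N. (if z = (xs k, ys ((k+1) mod N)) then 1 else 0)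
                          - (if z = (xs k, ys k) then 1 else 0))"

lemma shift_sum:
  fixes F :: "nat \<Rightarrow> real"
  shows "(\<Sum>k<N. F ((k+1) mod N)) = (\<Sum>k<N. F k)"
proof (cases N)
  case 0 then show ?thesis by simp
next
  case (Suc M)
  have "(\<Sum>k<Suc M. F ((k+1) mod Suc M)) = (\<Sum>k<M. F ((k+1) mod Suc M)) + F 0"
    by (simp only: sum.lessThan_Suc) simp
  also have "(\<Sum>k<M. F ((k+1) mod Suc M)) = (\<Sum>k<M. F (Suc k))"
    by (rule sum.cong) auto
  also have "\<dots> + F 0 = (\<Sum>k<Suc M. F k)"
    by (subst sum.lessThan_Suc_shift) simp
  finally show ?thesis using Suc by simp
qed

lemma ind1: "(if (x,y) = (a,b) then (1::real) else 0) = (if y = b then (if x = a then 1 else 0) else 0)"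
  by simp
lemma ind2: "(if (x,y) = (a,b) then (1::real) else 0) = (if x = a then (if y = b then 1 else 0) else 0)"
  by simp
lemma ind3: "(u::'a\<Rightarrow>real) z * ((if z = p then 1 else 0) - (if z = e then 1 else 0)) =
   (if z = p then u z else 0) - (if z = e then u z else 0)"
  by simp

lemma cyc_row:
  "(\<Sum>y\<in>(UNIV::'y::finite set). cyc N xs ys (x, y)) = 0"
proof -
  have "(\<Sum>y\<in>(UNIV::'y set). cyc N xs ys (x, y))
     = (\<Sum>k<N. (\<Sum>y\<in>(UNIV::'y set). (if (x,y) = (xs k, ys ((k+1) mod N)) then 1 else 0)
                          - (if (x,y) = (xs k, ys k) then 1 else 0)))"
    unfolding cyc_def by (rule sum.swap)
  also have "\<dots> = (\<Sum>k<N. (0::real))"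
  proof (rule sum.cong)
    fix k
    have "(\<Sum>y\<in>(UNIV::'y set). (if (x,y) = (xs k, ys ((k+1) mod N)) then 1 else 0)
                          - (if (x,y) = (xs k, ys k) then (1::real) else 0))
       = (\<Sum>y\<in>(UNIV::'y set). (if y = ys ((k+1) mod N) then (if x = xs k then 1 else 0) else 0))
         - (\<Sum>y\<in>(UNIV::'y set). (if y = ys k then (if x = xs k then 1 else 0) else 0))"
      by (simp only: sum_subtractf ind1)
    also have "\<dots> = 0" by (simp only: sum.delta finite UNIV_I if_True)
    finally show "(\<Sum>y\<in>(UNIV::'y set). (if (x,y) = (xs k, ys ((k+1) mod N)) then 1 else 0)
                          - (if (x,y) = (xs k, ys k) then (1::real) else 0)) = 0" .
  qed simp
  finally show ?thesis by simp
qed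

lemma cyc_col:
  "(\<Sum>x\<in>(UNIV::'x::finite set). cyc N xs ys (x, y)) = 0"
proof -
  have "(\<Sum>x\<in>(UNIV::'x set). cyc N xs ys (x, y))
     = (\<Sum>k<N. (\<Sum>x\<in>(UNIV::'x set). (if (x,y) = (xs k, ys ((k+1) mod N)) then 1 else 0)
                          - (if (x,y) = (xs k, ys k) then 1 else 0)))"
    unfolding cyc_def by (rule sum.swap)
  also have "\<dots> = (\<Sum>k<N. (if y = ys ((k+1) mod N) then 1 else 0) - (if y = ys k then (1::real) else 0))"
  proof (rule sum.cong)
    fix k
    have "(\<Sum>x\<in>(UNIV::'x set). (if (x,y) = (xs k, ys ((k+1) mod N)) then 1 else 0)
                          - (if (x,y) = (xs k, ys k) then (1::real) else 0))
       = (\<Sum>x\<in>(UNIV::'x set). (if x = xs k then (if y = ys ((k+1) mod N) then 1 else 0) else 0))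
         - (\<Sum>x\<in>(UNIV::'x set). (if x = xs k then (if y = ys k then 1 else 0) else 0))"
      by (simp only: sum_subtractf ind2)
    also have "\<dots> = (if y = ys ((k+1) mod N) then 1 else 0) - (if y = ys k then (1::real) else 0)"
      by (simp only: sum.delta finite UNIV_I if_True)
    finally show "(\<Sum>x\<in>(UNIV::'x set). (if (x,y) = (xs k, ys ((k+1) mod N)) then 1 else 0)
                          - (if (x,y) = (xs k, ys k) then (1::real) else 0)) =
        (if y = ys ((k+1) mod N) then 1 else 0) - (if y = ys k then (1::real) else 0)" .
  qed simp
  also have "\<dots> = 0"
    using shift_sum[of "\<lambda>k. if y = ys k then 1 else 0" N] by (simp add: sum_subtractf)
  finally show ?thesis .
qed

lemma cyc_value:
  fixes u :: "'x::finite \<times> 'y::finite \<Rightarrow> real"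
  shows "(\<Sum>z\<in>UNIV. u z * cyc N xs ys z)
     = (\<Sum>k<N. u (xs k, ys ((k+1) mod N))) - (\<Sum>k<N. u (xs k, ys k))"
proof -
  have "(\<Sum>z\<in>UNIV. u z * cyc N xs ys z)
      = (\<Sum>k<N. (\<Sum>z\<in>UNIV. (if z = (xs k, ys ((k+1) mod N)) then u z else 0))
                - (\<Sum>z\<in>UNIV. (if z = (xs k, ys k) then u z else 0)))"
    unfolding cyc_def sum_distrib_left
    by (subst sum.swap) (simp only: ind3 sum_subtractf)
  also have "\<dots> = (\<Sum>k<N. u (xs k, ys ((k+1) mod N)) - u (xs k, ys k))"
    by (simp only: sum.delta finite UNIV_I if_True)
  finally show ?thesis by (simp add: sum_subtractf)
qed


lemma cyc_pos:
  assumes inj: "inj_on xs {..<N}" and j: "j < N"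
    and f: "\<And>k. k < N \<Longrightarrow> ys ((k+1) mod N) = f (xs k)"
    and ne: "\<And>k. k < N \<Longrightarrow> (xs j, f (xs j)) \<noteq> (xs k, ys k)"
  shows "cyc N xs ys (xs j, f (xs j)) = 1"
proof -
  have "cyc N xs ys (xs j, f (xs j)) = (\<Sum>k<N. (if k = j then 1 else 0) - 0)"
    unfolding cyc_def
  proof (rule sum.cong)
    fix k assume k: "k \<in> {..<N}"
    have "((xs j, f (xs j)) = (xs k, ys ((k+1) mod N))) = (k = j)"
      using inj k j f[of k] unfolding inj_on_def by auto
    then show "(if (xs j, f (xs j)) = (xs k, ys ((k + 1) mod N)) then 1 else 0) -
          (if (xs j, f (xs j)) = (xs k, ys k) then 1 else 0) = (if k = j then (1::real) else 0) - 0"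
      using ne[of k] k by simp
  qed simp
  also have "\<dots> = 1" using j by simp
  finally show ?thesis .
qed

lemma cyc_zero:
  assumes "\<And>k. k < N \<Longrightarrow> z \<noteq> (xs k, ys ((k+1) mod N))" "\<And>k. k < N \<Longrightarrow> z \<noteq> (xs k, ys k)"
  shows "cyc N xs ys z = 0"
  unfolding cyc_def using assms by (intro sum.neutral) auto

lemma funpow_period:
  assumes "(h ^^ N) x0 = x0"
  shows "(h ^^ m) x0 = (h ^^ (m mod N)) x0"
proof -
  have q: "(h ^^ (q * N)) x0 = x0" for q
  proof (induction q)
    case (Suc q)
    have "(h ^^ (Suc q * N)) x0 = (h ^^ N) ((h ^^ (q * N)) x0)"
      by (simp add: funpow_add)
    then show ?case using Suc assms by simp
  qed simp
  have "m = m mod N + (m div N) * N" by simp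
  then have "(h ^^ m) x0 = (h ^^ (m mod N)) ((h ^^ ((m div N) * N)) x0)"
    by (metis funpow_add o_apply)
  then show ?thesis using q by simp
qed

lemma key:
  fixes u :: "'x::finite \<times> 'y::finite \<Rightarrow> real"
  assumes S: "strictly_cyclically_monotone u S"
  shows "card (support D) = n \<Longrightarrow> (\<forall>x. (\<Sum>y\<in>UNIV. D (x,y)) = 0) \<Longrightarrow> (\<forall>y. (\<Sum>x\<in>UNIV. D (x,y)) = 0)
    \<Longrightarrow> (\<forall>z. D z < 0 \<longrightarrow> z \<in> S) \<Longrightarrow> D \<noteq> (\<lambda>_. 0) \<Longrightarrow> (\<Sum>z\<in>UNIV. u z * D z) < 0"
proof (induction n arbitrary: D rule: less_induct)
  case (less n D)
  note row = less.prems(2) and col = less.prems(3) and negS = less.prems(4)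
  define A where "A = {x. \<exists>y. D (x,y) < 0}"
  have rowpos: "\<exists>y. D (x,y) > 0" if xA: "x \<in> A" for x
  proof (rule ccontr)
    assume "\<not> ?thesis"
    then have le: "\<And>y. - D (x,y) \<ge> 0" by (simp add: not_less)
    obtain y0 where "D (x,y0) < 0" using xA A_def by auto
    then have "0 < (\<Sum>y\<in>UNIV. - D (x,y))"
      by (intro sum_pos2[of UNIV y0]) (use le in auto)
    then show False using row by (simp add: sum_negf)
  qed
  have colneg: "\<exists>x. D (x,y) < 0" if "D (x1,y) > 0" for x1 y
  proof (rule ccontr)
    assume "\<not> ?thesis"
    then have le: "\<And>x. D (x,y) \<ge> 0" by (simp add: not_less)
    have "0 < (\<Sum>x\<in>UNIV. D (x,y))"
      by (intro sum_pos2[of UNIV x1]) (use le that in auto)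
    then show False using col by simp
  qed
  have Ane: "A \<noteq> {}"
  proof -
    obtain z where "D z \<noteq> 0" using less.prems(5) by (meson ext)
    then obtain x y where xy: "D (x,y) \<noteq> 0" by (cases z) auto
    show ?thesis
    proof (cases "D (x,y) < 0")
      case True then show ?thesis unfolding A_def by auto
    next
      case False then have "D (x,y) > 0" using xy by simp
      then show ?thesis using colneg unfolding A_def by blast
    qed
  qed
  define f where "f x = (SOME y. D (x,y) > 0)" for x
  define gg where "gg y = (SOME x. D (x,y) < 0)" for y
  define h where "h = gg \<circ> f"
  have fpos: "D (x, f x) > 0" if "x \<in> A" for x
    unfolding f_def using rowpos[OF that] by (rule someI_ex)
  have hneg: "D (h x, f x) < 0" if "x \<in> A" for x
    unfolding h_def gg_def o_apply using colneg[OF fpos[OF that]] by (rule someI_ex)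
  have hA: "h x \<in> A" if "x \<in> A" for x using hneg[OF that] unfolding A_def by auto
  have hpA: "(h ^^ k) x \<in> A" if "x \<in> A" for x k
    by (induction k) (use that hA in auto)
  obtain a where a: "a \<in> A" using Ane by auto
  have "\<not> inj_on (\<lambda>k. (h ^^ k) a) {..card A}"
  proof
    assume "inj_on (\<lambda>k. (h ^^ k) a) {..card A}"
    then have "card ((\<lambda>k. (h ^^ k) a) ` {..card A}) = card {..card A}" by (rule card_image)
    moreover have "card ((\<lambda>k. (h ^^ k) a) ` {..card A}) \<le> card A"
      by (rule card_mono) (use hpA a in auto)
    ultimately show False by simp
  qed
  then obtain i j where ij: "i < j" "(h ^^ i) a = (h ^^ j) a"
    unfolding inj_on_def by (metis atMost_iff linorder_neqE_nat)
  define P where "P N \<longleftrightarrow> 0 < N \<and> (\<exists>x\<in>A. (h ^^ N) x = x)" for N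
  have "P (j - i)"
  proof -
    have "(h ^^ (j - i)) ((h ^^ i) a) = (h ^^ i) a"
      using ij by (metis funpow_add le_add_diff_inverse2 less_imp_le o_apply)
    then show ?thesis unfolding P_def using ij hpA a by auto
  qed
  define N where "N = (LEAST N. P N)"
  have PN: "P N" unfolding N_def by (rule LeastI) fact
  then obtain x0 where x0: "x0 \<in> A" "(h ^^ N) x0 = x0" and Npos: "0 < N" unfolding P_def by auto
  have injx: "inj_on (\<lambda>k. (h ^^ k) x0) {..<N}"
  proof (rule ccontr)
    assume "\<not> ?thesis"
    then obtain k l where kl: "k < l" "l < N" "(h ^^ k) x0 = (h ^^ l) x0"
      unfolding inj_on_def by (metis lessThan_iff linorder_neqE_nat)
    have "(h ^^ (l - k)) ((h ^^ k) x0) = (h ^^ k) x0"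
      using kl by (metis funpow_add le_add_diff_inverse2 less_imp_le o_apply)
    then have "P (l - k)" unfolding P_def using kl hpA x0 by auto
    then have "N \<le> l - k" unfolding N_def by (rule Least_le)
    then show False using kl by simp
  qed
  define xs where "xs k = (h ^^ k) x0" for k
  define ys where "ys k = f ((h ^^ (k + N - 1)) x0)" for k
  have xsA: "xs k \<in> A" for k unfolding xs_def using hpA x0 by auto
  have eneg: "D (xs k, ys k) < 0" for k
  proof -
    have "xs k = (h ^^ (k + N)) x0"
      unfolding xs_def using funpow_period[OF x0(2), of k] funpow_period[OF x0(2), of "k+N"] by simp
    also have "\<dots> = h ((h ^^ (k + N - 1)) x0)"
      using Npos by (metis Suc_diff_1 add_gr_0 funpow.simps(2) o_apply)
    finally show ?thesis unfolding ys_def using hneg[OF hpA[OF x0(1)]] by simp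
  qed
  have ysf: "ys ((k+1) mod N) = f (xs k)" if k: "k < N" for k
  proof -
    have "((k+1) mod N + N - 1) mod N = k"
    proof (cases "k + 1 < N")
      case True then show ?thesis using k by simp
    next
      case False then have "k + 1 = N" using k by simp
      then show ?thesis by simp
    qed
    then show ?thesis unfolding ys_def xs_def
      using funpow_period[OF x0(2), of "(k+1) mod N + N - 1"] by simp
  qed
  have ppos: "D (xs k, ys ((k+1) mod N)) > 0" if "k < N" for k
    using ysf[OF that] fpos[OF xsA] by simp
  define E where "E = {(xs i, ys i) | i. i < N}"
  define Pp where "Pp = {(xs i, ys ((i+1) mod N)) | i. i < N}"
  have "E \<noteq> Pp"
  proof
    assume "E = Pp"
    moreover have "(xs 0, ys 0) \<in> E" unfolding E_def using Npos by auto
    ultimately obtain i where "i < N" "(xs 0, ys 0) = (xs i, ys ((i+1) mod N))" unfolding Pp_def by auto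
    then show False using ppos[of i] eneg[of 0] by simp
  qed
  moreover have "\<forall>i<N. (xs i, ys i) \<in> S" using eneg negS by auto
  ultimately have ineq: "(\<Sum>i<N. u (xs i, ys i)) > (\<Sum>i<N. u (xs i, ys ((i + 1) mod N)))"
    using S unfolding strictly_cyclically_monotone_def E_def Pp_def by blast
  define C where "C = cyc N xs ys"
  have uC: "(\<Sum>z\<in>UNIV. u z * C z) < 0" unfolding C_def cyc_value using ineq by simp
  have injxs: "inj_on xs {..<N}" using injx unfolding xs_def by simp
  have C1: "C z = 1" if zP: "z \<in> Pp" for z
  proof -
    obtain j where j: "j < N" "z = (xs j, ys ((j+1) mod N))" using zP Pp_def by auto
    then have z: "z = (xs j, f (xs j))" using ysf by simp
    have "(xs j, f (xs j)) \<noteq> (xs k, ys k)" if "k < N" for k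
      using eneg[of k] fpos[OF xsA[of j]] by auto
    then show ?thesis unfolding C_def z using cyc_pos[where f=f, OF injxs j(1) ysf] by blast
  qed
  have C0: "C z = 0" if "z \<notin> Pp" "z \<notin> E" for z
    unfolding C_def using that unfolding Pp_def E_def by (intro cyc_zero) auto
  have Pfin: "finite Pp" "Pp \<noteq> {}" unfolding Pp_def using Npos by auto
  define t where "t = Min (D ` Pp)"
  have Ppos: "D z > 0" if "z \<in> Pp" for z using that ppos unfolding Pp_def by auto
  have Eneg: "D z < 0" if "z \<in> E" for z using that eneg unfolding E_def by auto
  have tle: "t \<le> D z" if "z \<in> Pp" for z unfolding t_def using that Pfin by simp
  obtain zs where zs: "zs \<in> Pp" "D zs = t" unfolding t_def using Pfin
    by (metis (mono_tags, lifting) Min_in empty_is_image finite_imageI imageE)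
  have tpos: "t > 0" using zs Ppos by metis
  define D' where "D' z = D z - t * C z" for z
  have row': "\<forall>x. (\<Sum>y\<in>UNIV. D' (x,y)) = 0"
    using row unfolding D'_def C_def by (simp add: sum_subtractf sum_distrib_left[symmetric] cyc_row)
  have col': "\<forall>y. (\<Sum>x\<in>UNIV. D' (x,y)) = 0"
    using col unfolding D'_def C_def by (simp add: sum_subtractf sum_distrib_left[symmetric] cyc_col)
  have negS': "\<forall>z. D' z < 0 \<longrightarrow> z \<in> S"
  proof (intro allI impI)
    fix z assume z: "D' z < 0"
    show "z \<in> S"
    proof (cases "z \<in> Pp")
      case True then show ?thesis using z tle[OF True] C1[OF True] unfolding D'_def by simp
    next
      case False
      show ?thesis
      proof (cases "z \<in> E")
        case True then show ?thesis using Eneg negS by blast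
      next
        case F2: False then show ?thesis using z C0[OF False F2] negS unfolding D'_def by (cases z) simp
      qed
    qed
  qed
  have sub: "support D' \<subset> support D"
  proof
    show "support D' \<subseteq> support D"
    proof
      fix z assume "z \<in> support D'"
      then have "D' z \<noteq> 0" unfolding support_def by simp
      show "z \<in> support D"
      proof (rule ccontr)
        assume "z \<notin> support D"
        then have D0: "D z = 0" unfolding support_def by simp
        then have "z \<notin> Pp" "z \<notin> E" using Ppos[of z] Eneg[of z] by auto
        then have "C z = 0" by (rule C0)
        then show False using D0 \<open>D' z \<noteq> 0\<close> unfolding D'_def by simp
      qed
    qed
    have "zs \<in> support D" "zs \<notin> support D'"
      using zs tpos C1[OF zs(1)] unfolding support_def D'_def by auto
    then show "support D' \<noteq> support D" by blast
  qed
  then have cardlt: "card (support D') < n" using less.prems(1) using psubset_card_mono[OF finite sub] by simp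
  have split: "(\<Sum>z\<in>UNIV. u z * D z) = (\<Sum>z\<in>UNIV. u z * D' z) + t * (\<Sum>z\<in>UNIV. u z * C z)"
    unfolding D'_def by (simp add: algebra_simps sum.distrib sum_subtractf sum_distrib_left)
  have "(\<Sum>z\<in>UNIV. u z * D' z) \<le> 0"
  proof (cases "D' = (\<lambda>_. 0)")
    case True then show ?thesis by simp
  next
    case False
    show ?thesis using less.IH[OF cardlt refl row' col' negS' False] by simp
  qed
  moreover have "t * (\<Sum>z\<in>UNIV. u z * C z) < 0" using tpos uC by (simp add: mult_pos_neg)
  ultimately show ?case using split by simp
qed


lemma sum_pairs:
  fixes F :: "'x::finite \<times> 'y::finite \<Rightarrow> real"
  shows "(\<Sum>z\<in>UNIV. F z) = (\<Sum>x\<in>UNIV. \<Sum>y\<in>UNIV. F (x,y))"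
  by (simp add: sum.cartesian_product)

lemma cyc_sum: "(\<Sum>z\<in>(UNIV::('x::finite \<times> 'y::finite) set). cyc N xs ys z) = 0"
  by (simp add: sum_pairs cyc_row)

lemma cyc_lower: "cyc N xs ys z \<ge> - real N"
proof -
  have "(\<Sum>k<N. (-1::real)) \<le> cyc N xs ys z"
    unfolding cyc_def by (rule sum_mono) auto
  then show ?thesis by simp
qed

lemma cyc_nonneg: assumes "\<And>k. k < N \<Longrightarrow> z \<noteq> (xs k, ys k)" shows "cyc N xs ys z \<ge> 0"
  unfolding cyc_def using assms by (intro sum_nonneg) auto

lemma cyc_neg: assumes "\<And>k. k < N \<Longrightarrow> z \<noteq> (xs k, ys ((k+1) mod N))" "j < N" "z = (xs j, ys j)"
  shows "cyc N xs ys z < 0"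
proof -
  have "0 < (\<Sum>k<N. - ((if z = (xs k, ys ((k+1) mod N)) then 1 else 0)
                          - (if z = (xs k, ys k) then (1::real) else 0)))"
    using assms by (intro sum_pos2[of _ j]) auto
  then show ?thesis unfolding cyc_def by (simp add: sum_subtractf)
qed

lemma cyc_posi: assumes "\<And>k. k < N \<Longrightarrow> z \<noteq> (xs k, ys k)" "j < N" "z = (xs j, ys ((j+1) mod N))"
  shows "cyc N xs ys z > 0"
  unfolding cyc_def using assms by (intro sum_pos2[of _ j]) auto

theorem proposition4:
  fixes u :: "'x::finite \<times> 'y::finite \<Rightarrow> real"
    and rho :: "'x \<Rightarrow> real" and phi :: "'y \<Rightarrow> real"
    and g :: "'x \<times> 'y \<Rightarrow> real"
  assumes "is_distribution rho" and "is_distribution phi"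
    and "is_distribution g" and "has_marginals g rho phi"
  shows "unique_ot_solution u rho phi g \<longleftrightarrow> strictly_cyclically_monotone u (support g)"
proof
  assume S: "strictly_cyclically_monotone u (support g)"
  show "unique_ot_solution u rho phi g"
    unfolding unique_ot_solution_def
  proof (intro conjI allI impI)
    fix g' assume g': "is_distribution g' \<and> has_marginals g' rho phi \<and> g' \<noteq> g"
    define D where "D z = g' z - g z" for z
    have row: "\<forall>x. (\<Sum>y\<in>UNIV. D (x,y)) = 0"
      using g' assms(4) unfolding D_def has_marginals_def by (simp add: sum_subtractf)
    have col: "\<forall>y. (\<Sum>x\<in>UNIV. D (x,y)) = 0"
      using g' assms(4) unfolding D_def has_marginals_def by (simp add: sum_subtractf)
    have negS: "\<forall>z. D z < 0 \<longrightarrow> z \<in> support g"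
    proof (intro allI impI)
      fix z assume "D z < 0"
      moreover have "g' z \<ge> 0" using g' unfolding is_distribution_def by (cases z) auto
      ultimately show "z \<in> support g" unfolding D_def support_def by auto
    qed
    have nz: "D \<noteq> (\<lambda>_. 0)"
    proof
      assume "D = (\<lambda>_. 0)"
      then have "g' = g" unfolding D_def by (metis eq_iff_diff_eq_0 ext)
      then show False using g' by simp
    qed
    have "(\<Sum>z\<in>UNIV. u z * D z) < 0" by (rule key[OF S refl row col negS nz])
    then show "transport_value u g' < transport_value u g"
      unfolding transport_value_def D_def by (simp add: right_diff_distrib sum_subtractf)
  qed (use assms in auto)
next
  assume U: "unique_ot_solution u rho phi g"
  show "strictly_cyclically_monotone u (support g)"
    unfolding strictly_cyclically_monotone_def
  proof (intro allI impI)
    fix N :: nat and xs :: "nat \<Rightarrow> 'x" and ys :: "nat \<Rightarrow> 'y"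
    assume inS: "\<forall>i<N. (xs i, ys i) \<in> support g"
      and ne: "{(xs i, ys i) | i. i < N} \<noteq> {(xs i, ys ((i + 1) mod N)) | i. i < N}"
    show "(\<Sum>i<N. u (xs i, ys i)) > (\<Sum>i<N. u (xs i, ys ((i + 1) mod N)))"
    proof (rule ccontr)
      assume nlt: "\<not> ?thesis"
      have Npos: "N > 0" using ne by (cases N) auto
      have gnn: "g z \<ge> 0" for z using assms(3) unfolding is_distribution_def by (cases z) auto
      define M where "M = Min ((\<lambda>k. g (xs k, ys k)) ` {..<N})"
      have Mpos: "M > 0"
        unfolding M_def using Npos inS gnn unfolding support_def
        by (subst Min_gr_iff) (auto simp: order_le_neq_trans)
      have Mle: "M \<le> g (xs k, ys k)" if "k < N" for k unfolding M_def using that by simp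
      define eps where "eps = M / real N"
      have epspos: "eps > 0" unfolding eps_def using Mpos Npos by simp
      have epsN: "eps * real N = M" unfolding eps_def using Npos by simp
      define C where "C = cyc N xs ys"
      define g' where "g' z = g z + eps * C z" for z
      have g'nn: "g' z \<ge> 0" for z
      proof (cases "\<exists>k<N. z = (xs k, ys k)")
        case True
        then obtain k where k: "k < N" "z = (xs k, ys k)" by auto
        have "eps * C z \<ge> eps * (- real N)"
          using cyc_lower[of N xs ys z] epspos unfolding C_def by (intro mult_left_mono) auto
        then show ?thesis unfolding g'_def using Mle[OF k(1)] k epsN by simp
      next
        case False
        then have "C z \<ge> 0" unfolding C_def by (intro cyc_nonneg) auto
        then show ?thesis unfolding g'_def using gnn[of z] epspos by simp
      qed
      have dist: "is_distribution g'"
        using assms(3) g'nn cyc_sum unfolding is_distribution_def g'_def C_def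
        by (simp add: sum.distrib sum_distrib_left[symmetric] cyc_sum)
      have marg: "has_marginals g' rho phi"
        using assms(4) unfolding has_marginals_def g'_def C_def
        by (simp add: sum.distrib sum_distrib_left[symmetric] cyc_row cyc_col)
      have "\<exists>z. C z \<noteq> 0"
      proof -
        obtain z where z: "z \<in> {(xs i, ys i) | i. i < N} \<and> z \<notin> {(xs i, ys ((i + 1) mod N)) | i. i < N}
             \<or> z \<notin> {(xs i, ys i) | i. i < N} \<and> z \<in> {(xs i, ys ((i + 1) mod N)) | i. i < N}"
          using ne by blast
        then show ?thesis
        proof
          assume h: "z \<in> {(xs i, ys i) | i. i < N} \<and> z \<notin> {(xs i, ys ((i + 1) mod N)) | i. i < N}"
          then obtain j where "j < N" "z = (xs j, ys j)" by auto
          then have "C z < 0" unfolding C_def using h by (intro cyc_neg) auto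
          then show ?thesis by (intro exI[of _ z]) simp
        next
          assume h: "z \<notin> {(xs i, ys i) | i. i < N} \<and> z \<in> {(xs i, ys ((i + 1) mod N)) | i. i < N}"
          then obtain j where "j < N" "z = (xs j, ys ((j+1) mod N))" by auto
          then have "C z > 0" unfolding C_def using h by (intro cyc_posi) auto
          then show ?thesis by (intro exI[of _ z]) simp
        qed
      qed
      then have neq: "g' \<noteq> g" unfolding g'_def using epspos by (metis add_cancel_left_right mult_eq_0_iff less_irrefl)
      have "transport_value u g' < transport_value u g"
        using U dist marg neq unfolding unique_ot_solution_def by blast
      moreover have "transport_value u g' = transport_value u g + eps * (\<Sum>z\<in>UNIV. u z * C z)"
        unfolding transport_value_def g'_def
        by (simp add: algebra_simps sum.distrib sum_distrib_left)
      moreover have "(\<Sum>z\<in>UNIV. u z * C z) \<ge> 0"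
        unfolding C_def cyc_value using nlt by simp
      ultimately show False using epspos by (smt (verit) mult_nonneg_nonneg)
    qed
  qed
qed

end
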